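(* Fix $m\ge 1$. For every constant $c>2$, \[\liminf_{n\to\infty}\left\|OST_{m,n}^{\,n\log n-n\log\log n-cn}-U_{m,n}\right\|_{TV}\geq 1-\frac{\pi^2}{6(c-2)^2}.\]
   Context: Let $\xi$ be a primitive $m$-th root of unity and $[n]=\{1,\dots,n\}$. The generalized symmetric group $G_{m,n}$ is the set of tuples $(\xi^{k_1},\dots,\xi^{k_n},\sigma)$ with $k_i\in\mathbb{Z}_m$, $\sigma\in S_n$, with multiplication $(\xi^{k_1},\dots,\xi^{k_n},\sigma)(\xi^{k_1'},\dots,\xi^{k_n'},\sigma')=(\xi^{k_1}\xi^{k'_{\sigma(1)}},\dots,\xi^{k_n}\xi^{k'_{\sigma(n)}},\sigma\sigma')$. For $1\le i\le j\le n$, $k\in\mathbb{Z}_m$, let $g_{i,j,k}$ have permutation part the transposition $(ij)$ (identity if $i=j$) and tuple with $\xi^k$ in positions $i$ and $j$ and $1$ elsewhere. $OST_{m,n}$ is the law of $g_{i,j,k}$ with $j$ uniform on $[n]$, then $i$ uniform on $[j]$, $k$ uniform on $\mathbb{Z}_m$ independently (probability $\frac{1}{njm}$ per triple). $OST^t_{m,n}$ is its $t$-fold convolution power (exponents are understood as integers, e.g. rounded). $U_{m,n}$ is the uniform distribution on $G_{m,n}$ and $\|P-Q\|_{TV}=\frac12\sum_g|P(g)-Q(g)|$. *)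

theory Defs
  imports "HOL-Analysis.Analysis" "HOL-Combinatorics.Permutations" "HOL-Combinatorics.Transposition"
begin

text \<open>Elements of the generalized symmetric group G_{m,n} are encoded as pairs (k, sigma),
  where k i in {0..m-1} is the exponent of the root of unity at position i (for i in [n];
  k i = 0 outside [n]) and sigma is a permutation of [n] = {1..n}.\<close>

type_synonym gsg = "(nat \<Rightarrow> nat) \<times> (nat \<Rightarrow> nat)"

definition G :: "nat \<Rightarrow> nat \<Rightarrow> gsg set" where
  "G m n = {(k, \<sigma>). \<sigma> permutes {1..n} \<and>
      (\<forall>i. (i \<in> {1..n} \<longrightarrow> k i < m) \<and> (i \<notin> {1..n} \<longrightarrow> k i = 0))}"

text \<open>(xi^k_1..xi^k_n, sigma)(xi^k'_1..xi^k'_n, sigma') =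
  (xi^(k_1 + k'_(sigma 1)), ..., sigma o sigma').\<close>
definition gmult :: "nat \<Rightarrow> nat \<Rightarrow> gsg \<Rightarrow> gsg \<Rightarrow> gsg" where
  "gmult m n a b = ((\<lambda>i. if i \<in> {1..n} then (fst a i + fst b (snd a i)) mod m else 0),
                    snd a \<circ> snd b)"

definition gone :: gsg where
  "gone = ((\<lambda>i. 0), id)"

definition gen :: "nat \<Rightarrow> nat \<Rightarrow> nat \<Rightarrow> gsg" where
  "gen i j k = ((\<lambda>l. if l = i \<or> l = j then k else 0), Transposition.transpose i j)"

definition OST :: "nat \<Rightarrow> nat \<Rightarrow> gsg \<Rightarrow> real" where
  "OST m n g = (\<Sum>j\<in>{1..n}. \<Sum>i\<in>{1..j}. \<Sum>k\<in>{..<m}.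
       (if g = gen i j k then 1 / (real n * real j * real m) else 0))"

definition conv :: "nat \<Rightarrow> nat \<Rightarrow> (gsg \<Rightarrow> real) \<Rightarrow> (gsg \<Rightarrow> real) \<Rightarrow> gsg \<Rightarrow> real" where
  "conv m n P Q g = (\<Sum>a\<in>G m n. \<Sum>b\<in>G m n. if gmult m n a b = g then P a * Q b else 0)"

fun conv_pow :: "nat \<Rightarrow> nat \<Rightarrow> (gsg \<Rightarrow> real) \<Rightarrow> nat \<Rightarrow> gsg \<Rightarrow> real" where
  "conv_pow m n P 0 = (\<lambda>g. if g = gone then 1 else 0)"
| "conv_pow m n P (Suc t) = conv m n (conv_pow m n P t) P"

definition unif :: "nat \<Rightarrow> nat \<Rightarrow> gsg \<Rightarrow> real" where
  "unif m n g = (if g \<in> G m n then 1 / real (card (G m n)) else 0)"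

definition tv :: "nat \<Rightarrow> nat \<Rightarrow> (gsg \<Rightarrow> real) \<Rightarrow> (gsg \<Rightarrow> real) \<Rightarrow> real" where
  "tv m n P Q = (1/2) * (\<Sum>g\<in>G m n. \<bar>P g - Q g\<bar>)"

end

theory Submission
  imports Defs "HOL-Real_Asymp.Real_Asymp"
begin
lemma G_mem: "(k, s) \<in> G m n \<longleftrightarrow> s permutes {1..n} \<and>
      (\<forall>i. (i \<in> {1..n} \<longrightarrow> k i < m) \<and> (i \<notin> {1..n} \<longrightarrow> k i = 0))"
  by (simp add: G_def)

lemma gmult_G:
  assumes "m \<ge> 1" "a \<in> G m n" "b \<in> G m n"
  shows "gmult m n a b \<in> G m n"
proof -
  obtain k1 s1 where a: "a = (k1, s1)" by fastforce
  obtain k2 s2 where b: "b = (k2, s2)" by fastforce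
  have "s1 permutes {1..n}" "s2 permutes {1..n}" using assms a b by (auto simp: G_def)
  then have "s1 \<circ> s2 permutes {1..n}" by (metis permutes_compose)
  then show ?thesis using assms(1) by (auto simp: a b gmult_def G_def)
qed

lemma gone_G: "m \<ge> 1 \<Longrightarrow> gone \<in> G m n"
  by (auto simp: gone_def G_def permutes_id)

lemma gen_G:
  assumes "1 \<le> a" "a \<le> j" "j \<le> n" "k < m"
  shows "gen a j k \<in> G m n"
proof -
  have "Transposition.transpose a j permutes {1..n}"
    using assms by (intro permutes_swap_id) auto
  then show ?thesis using assms by (auto simp: gen_def G_def)
qed

lemma finite_G: "finite (G m n)"
proof -
  have "G m n \<subseteq> {k. \<forall>x. (x \<in> {1..n} \<longrightarrow> k x \<in> {..<m}) \<and> (x \<notin> {1..n} \<longrightarrow> k x = 0)} \<times> {s. s permutes {1..n}}"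
    by (auto simp: G_def)
  moreover have "finite ({k. \<forall>x. (x \<in> {1..n} \<longrightarrow> k x \<in> {..<m}) \<and> (x \<notin> {1..n} \<longrightarrow> k x = 0)} \<times> {s. s permutes {1..n}})"
    by (intro finite_cartesian_product finite_set_of_finite_funs finite_permutations) auto
  ultimately show ?thesis by (rule finite_subset)
qed

lemma card_G_pos: "m \<ge> 1 \<Longrightarrow> card (G m n) > 0"
  using finite_G gone_G card_gt_0_iff by blast

definition Trip :: "nat \<Rightarrow> nat \<Rightarrow> (nat \<times> nat \<times> nat) set" where
  "Trip n m = (SIGMA j:{1..n}. SIGMA a:{1..j}. {..<m})"

definition wgt :: "nat \<Rightarrow> nat \<Rightarrow> nat \<times> nat \<times> nat \<Rightarrow> real" where
  "wgt n m x = 1 / (real n * real (fst x) * real m)"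

definition gT :: "nat \<times> nat \<times> nat \<Rightarrow> gsg" where
  "gT x = gen (fst (snd x)) (fst x) (snd (snd x))"

lemma finite_Trip: "finite (Trip n m)"
  by (auto simp: Trip_def)

lemma gT_G: "x \<in> Trip n m \<Longrightarrow> gT x \<in> G m n"
  by (auto simp: Trip_def gT_def intro!: gen_G)

lemma Trip_sum: "(\<Sum>x\<in>Trip n m. f x) = (\<Sum>j\<in>{1..n}. \<Sum>a\<in>{1..j}. \<Sum>k<m. f (j,a,k))"
proof -
  have "(\<Sum>x\<in>Trip n m. f x) = (\<Sum>j\<in>{1..n}. \<Sum>y\<in>(SIGMA a:{1..j}. {..<m}). f (j,y))"
    unfolding Trip_def by (subst sum.Sigma) (auto simp: split_def)
  also have "\<dots> = (\<Sum>j\<in>{1..n}. \<Sum>a\<in>{1..j}. \<Sum>k<m. f (j,a,k))"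
    by (intro sum.cong refl, subst sum.Sigma) (auto simp: split_def)
  finally show ?thesis .
qed

lemma OST_alt: "OST m n g = (\<Sum>x\<in>Trip n m. if g = gT x then wgt n m x else 0)"
  unfolding OST_def Trip_sum gT_def wgt_def by (intro sum.cong refl) simp

lemma wf_nonneg: "wgt n m x \<ge> 0"
  by (simp add: wgt_def)

lemma sum_wf: assumes "n \<ge> 1" "m \<ge> 1" shows "(\<Sum>x\<in>Trip n m. wgt n m x) = 1"
proof -
  have "(\<Sum>x\<in>Trip n m. wgt n m x) = (\<Sum>j\<in>{1..n}. \<Sum>a\<in>{1..j}. \<Sum>k<m. 1 / (real n * real j * real m))"
    unfolding Trip_sum wgt_def by simp
  also have "\<dots> = (\<Sum>j\<in>{1..n}. 1 / real n)"
    using assms by (intro sum.cong refl) (simp add: field_simps)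
  also have "\<dots> = 1" using assms by simp
  finally show ?thesis .
qed

definition Wd :: "nat \<Rightarrow> nat \<Rightarrow> nat \<Rightarrow> (nat \<times> nat \<times> nat) list set" where
  "Wd n m t = {xs. set xs \<subseteq> Trip n m \<and> length xs = t}"

fun pw :: "nat \<Rightarrow> nat \<Rightarrow> (nat \<times> nat \<times> nat) list \<Rightarrow> gsg" where
  "pw m n [] = gone"
| "pw m n (x # xs) = gmult m n (pw m n xs) (gT x)"

definition wt :: "nat \<Rightarrow> nat \<Rightarrow> (nat \<times> nat \<times> nat) list \<Rightarrow> real" where
  "wt n m xs = prod_list (map (wgt n m) xs)"

lemma finite_Wd: "finite (Wd n m t)"
  unfolding Wd_def by (rule finite_lists_length_eq[OF finite_Trip])

lemma Wd_0: "Wd n m 0 = {[]}"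
  by (auto simp: Wd_def)

lemma Wd_Suc: "Wd n m (Suc t) = (\<lambda>(x,xs). x # xs) ` (Trip n m \<times> Wd n m t)"
proof
  show "Wd n m (Suc t) \<subseteq> (\<lambda>(x,xs). x # xs) ` (Trip n m \<times> Wd n m t)"
  proof
    fix ys assume "ys \<in> Wd n m (Suc t)"
    then obtain x xs where "ys = x # xs" "x \<in> Trip n m" "xs \<in> Wd n m t"
      by (cases ys) (auto simp: Wd_def)
    then show "ys \<in> (\<lambda>(x,xs). x # xs) ` (Trip n m \<times> Wd n m t)" by force
  qed
qed (auto simp: Wd_def)

lemma sum_Wd_Suc: "(\<Sum>ys\<in>Wd n m (Suc t). F ys) = (\<Sum>x\<in>Trip n m. \<Sum>xs\<in>Wd n m t. F (x # xs))"
proof -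
  have inj: "inj_on (\<lambda>(x,xs). x # xs) (Trip n m \<times> Wd n m t)"
    by (auto simp: inj_on_def)
  have "(\<Sum>ys\<in>Wd n m (Suc t). F ys) = (\<Sum>p\<in>Trip n m \<times> Wd n m t. F (fst p # snd p))"
    unfolding Wd_Suc by (subst sum.reindex[OF inj]) (simp add: split_def)
  also have "\<dots> = (\<Sum>x\<in>Trip n m. \<Sum>xs\<in>Wd n m t. F (x # xs))"
    by (simp add: sum.cartesian_product split_def)
  finally show ?thesis .
qed

lemma pw_G: "m \<ge> 1 \<Longrightarrow> set xs \<subseteq> Trip n m \<Longrightarrow> pw m n xs \<in> G m n"
  by (induction xs) (auto intro: gmult_G gone_G gT_G)

lemma sum_prod_Wd:
  fixes f :: "nat \<times> nat \<times> nat \<Rightarrow> real"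
  shows "(\<Sum>xs\<in>Wd n m t. prod_list (map f xs)) = (\<Sum>x\<in>Trip n m. f x) ^ t"
proof (induction t)
  case 0 then show ?case by (simp add: Wd_0)
next
  case (Suc t)
  have "(\<Sum>xs\<in>Wd n m (Suc t). prod_list (map f xs)) = (\<Sum>x\<in>Trip n m. \<Sum>xs\<in>Wd n m t. f x * prod_list (map f xs))"
    by (simp add: sum_Wd_Suc)
  also have "\<dots> = (\<Sum>x\<in>Trip n m. f x * (\<Sum>xs\<in>Wd n m t. prod_list (map f xs)))"
    by (simp only: sum_distrib_left)
  also have "\<dots> = (\<Sum>x\<in>Trip n m. f x * (\<Sum>x\<in>Trip n m. f x) ^ t)"
    by (simp only: Suc.IH)
  also have "\<dots> = (\<Sum>x\<in>Trip n m. f x) * (\<Sum>x\<in>Trip n m. f x) ^ t"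
    by (simp only: sum_distrib_right)
  also have "\<dots> = (\<Sum>x\<in>Trip n m. f x) ^ Suc t"
    by simp
  finally show ?case .
qed

lemma OST_expect:
  assumes "m \<ge> 1"
  shows "(\<Sum>b\<in>G m n. OST m n b * H b) = (\<Sum>x\<in>Trip n m. wgt n m x * H (gT x))"
proof -
  have "(\<Sum>b\<in>G m n. OST m n b * H b) = (\<Sum>b\<in>G m n. \<Sum>x\<in>Trip n m. if gT x = b then wgt n m x * H b else 0)"
    unfolding OST_alt sum_distrib_right by (intro sum.cong refl) auto
  also have "\<dots> = (\<Sum>x\<in>Trip n m. \<Sum>b\<in>G m n. if gT x = b then wgt n m x * H b else 0)"
    by (rule sum.swap)
  also have "\<dots> = (\<Sum>x\<in>Trip n m. wgt n m x * H (gT x))"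
    using gT_G[of _ n m] by (intro sum.cong refl) (simp add: finite_G)
  finally show ?thesis .
qed

lemma conv_pow_expect:
  assumes "m \<ge> 1"
  shows "(\<Sum>g\<in>G m n. conv_pow m n (OST m n) t g * h g) = (\<Sum>xs\<in>Wd n m t. wt n m xs * h (pw m n xs))"
proof (induction t arbitrary: h)
  case 0
  have "(\<Sum>g\<in>G m n. conv_pow m n (OST m n) 0 g * h g) = (\<Sum>g\<in>G m n. if gone = g then h g else 0)"
    by (intro sum.cong refl) auto
  also have "\<dots> = h gone" using gone_G[OF assms] by (simp add: finite_G)
  finally show ?case by (simp add: Wd_0 wt_def)
next
  case (Suc t)
  let ?P = "conv_pow m n (OST m n) t"
  have "(\<Sum>g\<in>G m n. conv_pow m n (OST m n) (Suc t) g * h g)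
      = (\<Sum>g\<in>G m n. \<Sum>a\<in>G m n. \<Sum>b\<in>G m n. if gmult m n a b = g then ?P a * OST m n b * h g else 0)"
    unfolding conv_pow.simps conv_def sum_distrib_right by (intro sum.cong refl) simp
  also have "\<dots> = (\<Sum>a\<in>G m n. \<Sum>g\<in>G m n. \<Sum>b\<in>G m n. if gmult m n a b = g then ?P a * OST m n b * h g else 0)"
    by (rule sum.swap)
  also have "\<dots> = (\<Sum>a\<in>G m n. \<Sum>b\<in>G m n. \<Sum>g\<in>G m n. if gmult m n a b = g then ?P a * OST m n b * h g else 0)"
    by (rule sum.cong[OF refl], rule sum.swap)
  also have "\<dots> = (\<Sum>a\<in>G m n. \<Sum>b\<in>G m n. ?P a * OST m n b * h (gmult m n a b))"
    using gmult_G[OF assms] by (intro sum.cong refl) (simp add: finite_G)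
  also have "\<dots> = (\<Sum>a\<in>G m n. ?P a * (\<Sum>b\<in>G m n. OST m n b * h (gmult m n a b)))"
    by (simp add: sum_distrib_left mult.assoc)
  also have "\<dots> = (\<Sum>xs\<in>Wd n m t. wt n m xs * (\<Sum>b\<in>G m n. OST m n b * h (gmult m n (pw m n xs) b)))"
    by (rule Suc.IH)
  also have "\<dots> = (\<Sum>xs\<in>Wd n m t. \<Sum>x\<in>Trip n m. wt n m (x # xs) * h (pw m n (x # xs)))"
    by (simp add: OST_expect[OF assms] sum_distrib_left wt_def mult_ac)
  also have "\<dots> = (\<Sum>x\<in>Trip n m. \<Sum>xs\<in>Wd n m t. wt n m (x # xs) * h (pw m n (x # xs)))"
    by (rule sum.swap)
  also have "\<dots> = (\<Sum>ys\<in>Wd n m (Suc t). wt n m ys * h (pw m n ys))"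
    by (simp add: sum_Wd_Suc)
  finally show ?case .
qed

lemma tv_lower:
  fixes P Q :: "gsg \<Rightarrow> real"
  assumes "finite X" "sum P X = 1" "sum Q X = 1"
  shows "(1/2) * (\<Sum>g\<in>X. \<bar>P g - Q g\<bar>) \<ge> (\<Sum>g\<in>X. P g * of_bool (g \<in> A)) - (\<Sum>g\<in>X. Q g * of_bool (g \<in> A))"
proof -
  have "(\<Sum>g\<in>X. (P g - Q g) * (2 * of_bool (g \<in> A) - 1)) \<le> (\<Sum>g\<in>X. \<bar>P g - Q g\<bar>)"
    by (intro sum_mono) (auto simp: abs_if)
  moreover have "(\<Sum>g\<in>X. (P g - Q g) * (2 * of_bool (g \<in> A) - 1))
      = 2 * ((\<Sum>g\<in>X. P g * of_bool (g \<in> A)) - (\<Sum>g\<in>X. Q g * of_bool (g \<in> A))) - (sum P X - sum Q X)"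
    by (simp add: algebra_simps sum_subtractf sum.distrib sum_distrib_left)
  ultimately show ?thesis using assms by simp
qed

definition Fx :: "nat \<Rightarrow> nat \<Rightarrow> nat \<Rightarrow> gsg set" where
  "Fx m n p = {g\<in>G m n. snd g p = p \<and> fst g p = 0}"

lemma card_Fx:
  assumes "p \<in> {1..n}"
  shows "card (Fx m n p) * n \<le> card (G m n)"
proof -
  let ?phi = "\<lambda>(g::gsg, q::nat). (fst g, snd g \<circ> Transposition.transpose p q)"
  have inj: "inj_on ?phi (Fx m n p \<times> {1..n})"
  proof (rule inj_onI)
    fix x y
    assume hx: "x \<in> Fx m n p \<times> {1..n}" and hy: "y \<in> Fx m n p \<times> {1..n}"
      and eqxy: "?phi x = ?phi y"
    obtain k1 s1 q1 where x: "x = ((k1, s1), q1)" by (metis prod.exhaust)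
    obtain k2 s2 q2 where y: "y = ((k2, s2), q2)" by (metis prod.exhaust)
    have h1: "((k1, s1), q1) \<in> Fx m n p \<times> {1..n}" and h2: "((k2, s2), q2) \<in> Fx m n p \<times> {1..n}"
      and eq: "?phi ((k1, s1), q1) = ?phi ((k2, s2), q2)" using hx hy eqxy x y by auto
    have s1p: "s1 p = p" and s2p: "s2 p = p" using h1 h2 by (auto simp: Fx_def)
    have "inj s2" using h2 by (auto simp: Fx_def G_def intro: permutes_inj)
    have k: "k1 = k2" and s: "s1 \<circ> Transposition.transpose p q1 = s2 \<circ> Transposition.transpose p q2"
      using eq by auto
    have "s2 (Transposition.transpose p q2 q1) = s1 (Transposition.transpose p q1 q1)"
      using s by (metis comp_apply)
    also have "\<dots> = p" using s1p by simp
    finally have "s2 (Transposition.transpose p q2 q1) = s2 p" using s2p by simp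
    then have "Transposition.transpose p q2 q1 = p" using \<open>inj s2\<close> by (simp add: inj_eq)
    then have q: "q1 = q2" by (auto simp: transpose_eq_iff)
    have "s1 = s1 \<circ> Transposition.transpose p q1 \<circ> Transposition.transpose p q1"
      by (simp add: comp_assoc)
    also have "\<dots> = s2" using s q by (simp add: comp_assoc)
    finally show "x = y" using k q x y by simp
  qed
  have img: "?phi ` (Fx m n p \<times> {1..n}) \<subseteq> G m n"
  proof (rule image_subsetI)
    fix z assume z: "z \<in> Fx m n p \<times> {1..n}"
    obtain k s q where zz: "z = ((k, s), q)" by (metis prod.exhaust)
    from z have "((k, s), q) \<in> Fx m n p \<times> {1..n}" by (simp add: zz)
    then have "s permutes {1..n}" "q \<in> {1..n}" and kk: "(\<forall>i. (i \<in> {1..n} \<longrightarrow> k i < m) \<and> (i \<notin> {1..n} \<longrightarrow> k i = 0))"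
      by (auto simp: Fx_def G_def)
    moreover have "Transposition.transpose p q permutes {1..n}"
      using assms \<open>q \<in> {1..n}\<close> by (intro permutes_swap_id) auto
    ultimately have "s \<circ> Transposition.transpose p q permutes {1..n}" by (metis permutes_compose)
    then show "?phi z \<in> G m n" using kk by (simp add: G_def zz)
  qed
  have "card (Fx m n p \<times> {1..n}) \<le> card (G m n)"
    by (rule card_inj_on_le[OF inj img finite_G])
  then show ?thesis by (simp add: card_cartesian_product)
qed

lemma unif_A:
  assumes "m \<ge> 1" "S \<subseteq> {1..n}" "A \<subseteq> (\<Union>p\<in>S. Fx m n p)" "A \<subseteq> G m n"
  shows "(\<Sum>g\<in>G m n. unif m n g * of_bool (g \<in> A)) \<le> real (card S) / real n"
proof -
  have finS: "finite S" using assms(2) finite_subset by blast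
  have cG: "card (G m n) > 0" using card_G_pos[OF assms(1)] .
  have "(\<Sum>g\<in>G m n. unif m n g * of_bool (g \<in> A)) = (\<Sum>g\<in>G m n. if g \<in> A then 1 / real (card (G m n)) else 0)"
    by (intro sum.cong refl) (auto simp: unif_def)
  also have "\<dots> = real (card A) / real (card (G m n))"
  proof -
    have "{g \<in> G m n. g \<in> A} = A" using assms(4) by auto
    then show ?thesis using sum.inter_filter[OF finite_G, of "\<lambda>_. 1 / real (card (G m n))" m n "\<lambda>g. g \<in> A"]
      by simp
  qed
  also have "\<dots> \<le> real (card S) / real n"
  proof (cases "n = 0")
    case True then show ?thesis using assms(2,3) by auto
  next
    case False
    have fin: "finite (\<Union>p\<in>S. Fx m n p)"
      by (rule finite_subset[OF _ finite_G]) (auto simp: Fx_def)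
    have "card A \<le> card (\<Union>p\<in>S. Fx m n p)"
      by (rule card_mono[OF fin assms(3)])
    also have "\<dots> \<le> (\<Sum>p\<in>S. card (Fx m n p))" by (rule card_UN_le[OF finS])
    finally have "real (card A) * n \<le> (\<Sum>p\<in>S. real (card (Fx m n p)) * n)"
      by (simp add: sum_distrib_right[symmetric] mult_right_mono del: of_nat_sum flip: of_nat_sum)
    also have "\<dots> \<le> (\<Sum>p\<in>S. real (card (G m n)))"
      using card_Fx assms(2) by (intro sum_mono) (metis of_nat_le_iff of_nat_mult subsetD)
    also have "\<dots> = real (card S) * real (card (G m n))" by simp
    finally have "real (card A) * n \<le> real (card S) * real (card (G m n))" .
    then show ?thesis using False cG by (simp add: field_simps)
  qed
  finally show ?thesis .
qed

lemma sum_unif: "m \<ge> 1 \<Longrightarrow> (\<Sum>g\<in>G m n. unif m n g) = 1"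
  using card_G_pos[of m n] by (simp add: unif_def)

definition av :: "nat \<Rightarrow> nat \<times> nat \<times> nat \<Rightarrow> bool" where
  "av p x = (fst (snd x) \<noteq> p \<and> fst x \<noteq> p)"

lemma untouched_fix:
  assumes "p \<in> {1..n}" "\<forall>x\<in>set xs. av p x"
  shows "snd (pw m n xs) p = p \<and> fst (pw m n xs) p = 0"
  using assms(2)
proof (induction xs)
  case Nil then show ?case by (simp add: gone_def)
next
  case (Cons x xs)
  then show ?case using assms(1)
    by (auto simp: gmult_def gT_def gen_def av_def)
qed

lemma prod_list_ind:
  fixes f :: "'a \<Rightarrow> real"
  shows "prod_list (map f xs) * of_bool (\<forall>x\<in>set xs. Q x) = prod_list (map (\<lambda>x. f x * of_bool (Q x)) xs)"
  by (induction xs) auto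

lemma wt_nonneg: "wt n m xs \<ge> 0"
  unfolding wt_def by (rule prod_list_nonneg) (auto simp: wgt_def)

lemma sum_ind_Wd:
  "(\<Sum>xs\<in>Wd n m t. wt n m xs * of_bool (\<forall>x\<in>set xs. Q x)) = (\<Sum>x\<in>Trip n m. wgt n m x * of_bool (Q x)) ^ t"
  unfolding wt_def prod_list_ind by (rule sum_prod_Wd)

lemma sum_wt: "n \<ge> 1 \<Longrightarrow> m \<ge> 1 \<Longrightarrow> (\<Sum>xs\<in>Wd n m t. wt n m xs) = 1"
  unfolding wt_def by (simp add: sum_prod_Wd sum_wf)

lemma key:
  fixes n m t :: nat and S :: "nat set" and q r :: real
  assumes m1: "m \<ge> 1" and n1: "n \<ge> 1" and S: "S \<subseteq> {1..n}" "S \<noteq> {}"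
    and q: "0 \<le> q" "q \<le> 1/2" and r: "r \<ge> 0"
    and hu: "\<forall>p\<in>S. (\<Sum>x\<in>Trip n m. wgt n m x * of_bool (av p x)) \<ge> 1 - q"
    and hv: "\<forall>p\<in>S. \<forall>p'\<in>S. p \<noteq> p' \<longrightarrow> (\<Sum>x\<in>Trip n m. wgt n m x * of_bool (av p x \<and> av p' x))
               \<le> (\<Sum>x\<in>Trip n m. wgt n m x * of_bool (av p x)) * (\<Sum>x\<in>Trip n m. wgt n m x * of_bool (av p' x)) + r"
  shows "tv m n (conv_pow m n (OST m n) t) (unif m n) \<ge>
           1 - 1 / (real (card S) * (1 - q)^t) - (exp (4*r*t) - 1) - real (card S) / real n"
proof -
  define u where "u p = (\<Sum>x\<in>Trip n m. wgt n m x * of_bool (av p x))" for p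
  define v where "v p p' = (\<Sum>x\<in>Trip n m. wgt n m x * of_bool (av p x \<and> av p' x))" for p p'
  define U where "U xs = (\<Sum>p\<in>S. of_bool (\<forall>x\<in>set xs. av p x) :: real)" for xs
  define W where "W = Wd n m t"
  define D where "D = exp (4*r*t)"
  define \<mu> where "\<mu> = (\<Sum>p\<in>S. u p ^ t)"
  have finS: "finite S" using S(1) finite_subset by blast
  have finW: "finite W" by (simp add: W_def finite_Wd)
  have u_nn: "u p \<ge> 0" for p unfolding u_def by (intro sum_nonneg) (simp add: wf_nonneg)
  have v_nn: "v p p' \<ge> 0" for p p' unfolding v_def by (intro sum_nonneg) (simp add: wf_nonneg)
  have u_half: "u p \<ge> 1/2" if "p \<in> S" for p using hu that q unfolding u_def by force
  have wt1: "(\<Sum>xs\<in>W. wt n m xs) = 1" using sum_wt[OF n1 m1] by (simp add: W_def)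
  have mu_eq: "(\<Sum>xs\<in>W. wt n m xs * U xs) = \<mu>"
  proof -
    have "(\<Sum>xs\<in>W. wt n m xs * U xs) = (\<Sum>xs\<in>W. \<Sum>p\<in>S. wt n m xs * of_bool (\<forall>x\<in>set xs. av p x))"
      by (simp add: U_def sum_distrib_left)
    also have "\<dots> = (\<Sum>p\<in>S. \<Sum>xs\<in>W. wt n m xs * of_bool (\<forall>x\<in>set xs. av p x))"
      by (rule sum.swap)
    also have "\<dots> = \<mu>" unfolding \<mu>_def W_def u_def by (simp add: sum_ind_Wd)
    finally show ?thesis .
  qed
  have E2_eq: "(\<Sum>xs\<in>W. wt n m xs * (U xs)^2) = (\<Sum>p\<in>S. \<Sum>p'\<in>S. v p p' ^ t)"
  proof -
    have "(\<Sum>xs\<in>W. wt n m xs * (U xs)^2) = (\<Sum>xs\<in>W. \<Sum>p\<in>S. \<Sum>p'\<in>S. wt n m xs * of_bool (\<forall>x\<in>set xs. av p x \<and> av p' x))"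
    proof (intro sum.cong refl)
      fix xs
      have "(U xs)^2 = (\<Sum>p\<in>S. \<Sum>p'\<in>S. of_bool (\<forall>x\<in>set xs. av p x) * of_bool (\<forall>x\<in>set xs. av p' x))"
        by (simp add: U_def power2_eq_square sum_product)
      also have "\<dots> = (\<Sum>p\<in>S. \<Sum>p'\<in>S. of_bool (\<forall>x\<in>set xs. av p x \<and> av p' x))"
        by (intro sum.cong refl) auto
      finally show "wt n m xs * (U xs)^2 = (\<Sum>p\<in>S. \<Sum>p'\<in>S. wt n m xs * of_bool (\<forall>x\<in>set xs. av p x \<and> av p' x))"
        by (simp add: sum_distrib_left)
    qed
    also have "\<dots> = (\<Sum>p\<in>S. \<Sum>xs\<in>W. \<Sum>p'\<in>S. wt n m xs * of_bool (\<forall>x\<in>set xs. av p x \<and> av p' x))"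
      by (rule sum.swap)
    also have "\<dots> = (\<Sum>p\<in>S. \<Sum>p'\<in>S. \<Sum>xs\<in>W. wt n m xs * of_bool (\<forall>x\<in>set xs. av p x \<and> av p' x))"
      by (rule sum.cong[OF refl], rule sum.swap)
    also have "\<dots> = (\<Sum>p\<in>S. \<Sum>p'\<in>S. v p p' ^ t)"
      unfolding v_def W_def by (simp add: sum_ind_Wd)
    finally show ?thesis .
  qed
  have mu_lb: "\<mu> \<ge> real (card S) * (1 - q)^t"
  proof -
    have "\<forall>p\<in>S. (1 - q)^t \<le> u p ^ t"
      using hu q unfolding u_def by (auto intro: power_mono)
    then show ?thesis unfolding \<mu>_def using sum_bounded_below[of S "(1-q)^t" "\<lambda>p. u p ^ t"] by auto
  qed
  have cS: "card S > 0" using finS S(2) card_gt_0_iff by blast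
  have lbpos: "real (card S) * (1 - q)^t > 0" using cS q by simp
  have mu_pos: "\<mu> > 0" using mu_lb lbpos by linarith
  have tb: "v p p' ^ t \<le> of_bool (p = p') * u p ^ t + D * (u p ^ t * u p' ^ t)"
    if "p \<in> S" "p' \<in> S" for p p'
  proof (cases "p = p'")
    case True
    have "v p p' = u p" unfolding True u_def v_def by simp
    moreover have "D * (u p ^ t * u p' ^ t) \<ge> 0" using u_nn by (simp add: D_def)
    ultimately show ?thesis using True by simp
  next
    case False
    have "u p * u p' \<ge> 1/4" using mult_mono[OF u_half[OF that(1)] u_half[OF that(2)] u_nn] by simp
    have "v p p' \<le> u p * u p' + r" using hv that False unfolding u_def v_def by blast
    also have "r \<le> u p * u p' * (4 * r)"
      using mult_right_mono[OF \<open>1/4 \<le> u p * u p'\<close>, of "4 * r"] r by simp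
    finally have "v p p' \<le> u p * u p' * (1 + 4 * r)" by (simp add: algebra_simps)
    also have "\<dots> \<le> u p * u p' * exp (4 * r)"
      using u_nn by (intro mult_left_mono) (auto intro: exp_ge_add_one_self)
    finally have "v p p' ^ t \<le> (u p * u p' * exp (4 * r)) ^ t"
      using v_nn by (intro power_mono) auto
    also have "\<dots> = D * (u p ^ t * u p' ^ t)"
      by (simp add: D_def power_mult_distrib exp_of_nat_mult[symmetric] mult_ac)
    finally show ?thesis using False by simp
  qed
  have E2_le: "(\<Sum>p\<in>S. \<Sum>p'\<in>S. v p p' ^ t) \<le> \<mu> + D * \<mu>^2"
  proof -
    have "(\<Sum>p\<in>S. \<Sum>p'\<in>S. v p p' ^ t) \<le> (\<Sum>p\<in>S. \<Sum>p'\<in>S. of_bool (p = p') * u p ^ t + D * (u p ^ t * u p' ^ t))"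
      using tb by (intro sum_mono) auto
    also have "\<dots> = (\<Sum>p\<in>S. \<Sum>p'\<in>S. of_bool (p = p') * u p ^ t) + (\<Sum>p\<in>S. \<Sum>p'\<in>S. D * (u p ^ t * u p' ^ t))"
      by (simp add: sum.distrib)
    also have "(\<Sum>p\<in>S. \<Sum>p'\<in>S. of_bool (p = p') * u p ^ t) = (\<Sum>p\<in>S. u p ^ t)"
    proof (intro sum.cong refl)
      fix p assume "p \<in> S"
      have "(\<Sum>p'\<in>S. of_bool (p = p') * u p ^ t) = (\<Sum>p'\<in>S. if p = p' then u p ^ t else 0)"
        by (intro sum.cong refl) auto
      also have "\<dots> = u p ^ t" using \<open>p \<in> S\<close> finS by simp
      finally show "(\<Sum>p'\<in>S. of_bool (p = p') * u p ^ t) = u p ^ t" .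
    qed
    also have "(\<Sum>p\<in>S. \<Sum>p'\<in>S. D * (u p ^ t * u p' ^ t)) = D * ((\<Sum>p\<in>S. u p ^ t) * (\<Sum>p\<in>S. u p ^ t))"
    proof -
      have "(\<Sum>p\<in>S. \<Sum>p'\<in>S. D * (u p ^ t * u p' ^ t)) = (\<Sum>p\<in>S. (D * u p ^ t) * (\<Sum>p'\<in>S. u p' ^ t))"
        by (simp add: sum_distrib_left mult.assoc)
      also have "\<dots> = (\<Sum>p\<in>S. D * u p ^ t) * (\<Sum>p'\<in>S. u p' ^ t)"
        by (rule sum_distrib_right[symmetric])
      also have "\<dots> = D * ((\<Sum>p\<in>S. u p ^ t) * (\<Sum>p\<in>S. u p ^ t))"
        by (simp add: sum_distrib_left[symmetric])
      finally show ?thesis .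
    qed
    finally show ?thesis by (simp add: \<mu>_def power2_eq_square)
  qed
  define P0 where "P0 = (\<Sum>xs\<in>W. wt n m xs * of_bool (U xs = 0))"
  have cheb: "P0 * \<mu>^2 \<le> \<mu> + (D - 1) * \<mu>^2"
  proof -
    have "P0 * \<mu>^2 = (\<Sum>xs\<in>W. wt n m xs * of_bool (U xs = 0) * \<mu>^2)"
      by (simp add: P0_def sum_distrib_right)
    also have "\<dots> \<le> (\<Sum>xs\<in>W. wt n m xs * (U xs - \<mu>)^2)"
      using wt_nonneg by (intro sum_mono) auto
    also have "\<dots> = (\<Sum>xs\<in>W. wt n m xs * (U xs)^2 - 2 * \<mu> * (wt n m xs * U xs) + \<mu>^2 * wt n m xs)"
      by (intro sum.cong refl) (simp add: power2_diff algebra_simps)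
    also have "\<dots> = (\<Sum>xs\<in>W. wt n m xs * (U xs)^2) - (\<Sum>xs\<in>W. 2 * \<mu> * (wt n m xs * U xs)) + (\<Sum>xs\<in>W. \<mu>^2 * wt n m xs)"
      by (simp only: sum.distrib sum_subtractf)
    also have "\<dots> = (\<Sum>xs\<in>W. wt n m xs * (U xs)^2) - 2 * \<mu> * (\<Sum>xs\<in>W. wt n m xs * U xs) + \<mu>^2 * (\<Sum>xs\<in>W. wt n m xs)"
      by (simp only: sum_distrib_left)
    also have "\<dots> = (\<Sum>p\<in>S. \<Sum>p'\<in>S. v p p' ^ t) - \<mu>^2"
      using E2_eq mu_eq wt1 by (simp add: power2_eq_square)
    also have "\<dots> \<le> \<mu> + (D - 1) * \<mu>^2"
    proof -
      have "(D - 1) * \<mu>^2 = D * \<mu>^2 - \<mu>^2" by (simp add: left_diff_distrib)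
      then show ?thesis using E2_le by linarith
    qed
    finally show ?thesis .
  qed
  have P0_le: "P0 \<le> 1 / (real (card S) * (1 - q)^t) + (D - 1)"
  proof -
    have m2: "\<mu>^2 > 0" using mu_pos by simp
    have "P0 \<le> (\<mu> + (D - 1) * \<mu>^2) / \<mu>^2" using cheb m2 by (simp add: pos_le_divide_eq)
    also have "\<dots> = \<mu> / \<mu>^2 + (D - 1)" using m2 by (simp add: add_divide_distrib)
    also have "\<mu> / \<mu>^2 = 1 / \<mu>" using mu_pos by (simp add: power2_eq_square)
    also have "1 / \<mu> \<le> 1 / (real (card S) * (1 - q)^t)"
      using mu_lb lbpos by (intro divide_left_mono) auto
    finally show ?thesis by simp
  qed
  define A where "A = {g\<in>G m n. \<exists>p\<in>S. snd g p = p \<and> fst g p = 0}"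
  have PA: "(\<Sum>g\<in>G m n. conv_pow m n (OST m n) t g * of_bool (g \<in> A)) \<ge> 1 - P0"
  proof -
    have "(\<Sum>g\<in>G m n. conv_pow m n (OST m n) t g * of_bool (g \<in> A)) = (\<Sum>xs\<in>W. wt n m xs * of_bool (pw m n xs \<in> A))"
      unfolding W_def by (rule conv_pow_expect[OF m1])
    also have "\<dots> \<ge> (\<Sum>xs\<in>W. wt n m xs * (1 - of_bool (U xs = 0)))"
    proof (intro sum_mono)
      fix xs assume xs: "xs \<in> W"
      show "wt n m xs * (1 - of_bool (U xs = 0)) \<le> wt n m xs * of_bool (pw m n xs \<in> A)"
      proof (cases "U xs = 0")
        case True then show ?thesis using wt_nonneg by simp
      next
        case False
        have "\<exists>p\<in>S. \<forall>x\<in>set xs. av p x"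
        proof (rule ccontr)
          assume "\<not> (\<exists>p\<in>S. \<forall>x\<in>set xs. av p x)"
          then have "U xs = 0" unfolding U_def by (intro sum.neutral) auto
          with False show False by simp
        qed
        then obtain p where p: "p \<in> S" "\<forall>x\<in>set xs. av p x" by blast
        have "pw m n xs \<in> G m n" using xs pw_G[OF m1] by (simp add: W_def Wd_def)
        moreover have "snd (pw m n xs) p = p \<and> fst (pw m n xs) p = 0"
          using untouched_fix[of p n xs m] p S(1) by auto
        ultimately have "pw m n xs \<in> A" using p unfolding A_def by auto
        then show ?thesis using False by simp
      qed
    qed
    moreover have "(\<Sum>xs\<in>W. wt n m xs * (1 - of_bool (U xs = 0))) = 1 - P0"
      using wt1 by (simp add: P0_def right_diff_distrib sum_subtractf)
    ultimately show ?thesis by linarith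
  qed
  have UA: "(\<Sum>g\<in>G m n. unif m n g * of_bool (g \<in> A)) \<le> real (card S) / real n"
    by (rule unif_A[OF m1 S(1)]) (auto simp: A_def Fx_def)
  have sumP: "(\<Sum>g\<in>G m n. conv_pow m n (OST m n) t g) = 1"
    using conv_pow_expect[OF m1, of n t "\<lambda>_. 1"] sum_wt[OF n1 m1] by simp
  have "tv m n (conv_pow m n (OST m n) t) (unif m n) \<ge>
      (\<Sum>g\<in>G m n. conv_pow m n (OST m n) t g * of_bool (g \<in> A)) - (\<Sum>g\<in>G m n. unif m n g * of_bool (g \<in> A))"
    unfolding tv_def by (rule tv_lower[OF finite_G sumP sum_unif[OF m1]])
  then show ?thesis using PA UA P0_le D_def by linarith
qed

lemma w_j:
  assumes "p \<in> {1..n}" "m \<ge> 1"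
  shows "(\<Sum>x\<in>Trip n m. wgt n m x * of_bool (fst x = p)) = 1 / real n"
proof -
  have "(\<Sum>x\<in>Trip n m. wgt n m x * of_bool (fst x = p)) =
        (\<Sum>j\<in>{1..n}. \<Sum>a\<in>{1..j}. \<Sum>k<m. wgt n m (j,a,k) * of_bool (j = p))"
    by (simp add: Trip_sum)
  also have "\<dots> = (\<Sum>j\<in>{1..n}. if j = p then 1 / real n else 0)"
  proof (intro sum.cong refl)
    fix j assume j: "j \<in> {1..n}"
    show "(\<Sum>a\<in>{1..j}. \<Sum>k<m. wgt n m (j,a,k) * of_bool (j = p)) = (if j = p then 1 / real n else 0)"
      using j assms(2) by (auto simp: wgt_def)
  qed
  also have "\<dots> = 1 / real n" using assms(1) by (simp add: sum.delta')
  finally show ?thesis .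
qed

lemma w_a:
  assumes "m \<ge> 1"
  shows "(\<Sum>x\<in>Trip n m. wgt n m x * of_bool (fst (snd x) = p)) =
         (\<Sum>j\<in>{1..n}. if 1 \<le> p \<and> p \<le> j then 1 / (real n * real j) else 0)"
proof -
  have "(\<Sum>x\<in>Trip n m. wgt n m x * of_bool (fst (snd x) = p)) =
        (\<Sum>j\<in>{1..n}. \<Sum>a\<in>{1..j}. \<Sum>k<m. wgt n m (j,a,k) * of_bool (a = p))"
    by (simp add: Trip_sum)
  also have "\<dots> = (\<Sum>j\<in>{1..n}. if 1 \<le> p \<and> p \<le> j then 1 / (real n * real j) else 0)"
  proof (intro sum.cong refl)
    fix j assume j: "j \<in> {1..n}"
    have "(\<Sum>a\<in>{1..j}. \<Sum>k<m. wgt n m (j,a,k) * of_bool (a = p)) =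
          (\<Sum>a\<in>{1..j}. if p = a then real m / (real n * real j * real m) else 0)"
      by (intro sum.cong refl) (auto simp: wgt_def)
    also have "\<dots> = (if 1 \<le> p \<and> p \<le> j then 1 / (real n * real j) else 0)"
      using assms j by (simp add: sum.delta')
    finally show "(\<Sum>a\<in>{1..j}. \<Sum>k<m. wgt n m (j,a,k) * of_bool (a = p)) =
          (if 1 \<le> p \<and> p \<le> j then 1 / (real n * real j) else 0)" .
  qed
  finally show ?thesis .
qed

lemma w_a_bound:
  assumes "m \<ge> 1" "L < n" "n - L < p"
  shows "(\<Sum>x\<in>Trip n m. wgt n m x * of_bool (fst (snd x) = p)) \<le> real L / (real n * real (n - L))"
proof -
  have "(\<Sum>j\<in>{1..n}. if 1 \<le> p \<and> p \<le> j then 1 / (real n * real j) else 0) \<le>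
        (\<Sum>j\<in>{1..n}. if n - L < j then 1 / (real n * real (n - L)) else 0)"
  proof (intro sum_mono)
    fix j assume j: "j \<in> {1..n}"
    show "(if 1 \<le> p \<and> p \<le> j then 1 / (real n * real j) else 0) \<le> (if n - L < j then 1 / (real n * real (n - L)) else 0)"
    proof (cases "1 \<le> p \<and> p \<le> j")
      case True
      then have "n - L < j" using assms by linarith
      moreover have "real (n - L) \<le> real j" using \<open>n - L < j\<close> by simp
      moreover have "real (n - L) > 0" using assms by simp
      ultimately show ?thesis using True j
        by (simp add: frac_le mult_left_mono)
    next
      case False then show ?thesis by auto
    qed
  qed
  also have "\<dots> = real (card {j\<in>{1..n}. n - L < j}) * (1 / (real n * real (n - L)))"
    by (simp add: sum.inter_filter[symmetric])
  also have "{j\<in>{1..n}. n - L < j} = {n - L + 1..n}" using assms by auto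
  also have "real (card {n - L + 1..n}) = real L" using assms by simp
  finally show ?thesis using w_a[OF assms(1)] by simp
qed

lemma u_le1:
  assumes "n \<ge> 1" "m \<ge> 1"
  shows "(\<Sum>x\<in>Trip n m. wgt n m x * of_bool (P x)) \<le> 1"
proof -
  have "(\<Sum>x\<in>Trip n m. wgt n m x * of_bool (P x)) \<le> (\<Sum>x\<in>Trip n m. wgt n m x)"
    by (intro sum_mono) (auto simp: wf_nonneg)
  then show ?thesis using sum_wf[OF assms] by simp
qed

lemma compl_sum:
  assumes "n \<ge> 1" "m \<ge> 1"
  shows "(\<Sum>x\<in>Trip n m. wgt n m x * of_bool (P x)) = 1 - (\<Sum>x\<in>Trip n m. wgt n m x * of_bool (\<not> P x))"
proof -
  have "(\<Sum>x\<in>Trip n m. wgt n m x * of_bool (P x)) + (\<Sum>x\<in>Trip n m. wgt n m x * of_bool (\<not> P x))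
      = (\<Sum>x\<in>Trip n m. wgt n m x * of_bool (P x) + wgt n m x * of_bool (\<not> P x))"
    by (rule sum.distrib[symmetric])
  also have "\<dots> = (\<Sum>x\<in>Trip n m. wgt n m x)"
    by (intro sum.cong refl) auto
  finally have "(\<Sum>x\<in>Trip n m. wgt n m x * of_bool (P x)) + (\<Sum>x\<in>Trip n m. wgt n m x * of_bool (\<not> P x))
      = (\<Sum>x\<in>Trip n m. wgt n m x)" .
  then show ?thesis using sum_wf[OF assms] by simp
qed

lemma inst:
  fixes n m t L :: nat
  assumes m1: "m \<ge> 1" and L: "1 \<le> L" "L < n"
    and qh: "1 / real n + real L / (real n * real (n - L)) \<le> 1/2"
  shows "tv m n (conv_pow m n (OST m n) t) (unif m n) \<ge>
     1 - 1 / (real L * (1 - (1 / real n + real L / (real n * real (n - L))))^t)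
       - (exp (4 * (4 / (real n * real (n - L + 1))) * t) - 1) - real L / real n"
proof -
  define q where "q = 1 / real n + real L / (real n * real (n - L))"
  define r where "r = 4 / (real n * real (n - L + 1))"
  define S where "S = {n - L + 1..n}"
  have n1: "n \<ge> 1" using L by simp
  have cS: "card S = L" using L by (simp add: S_def)
  have S1: "S \<subseteq> {1..n}" "S \<noteq> {}" using L by (auto simp: S_def)
  have q0: "0 \<le> q" by (simp add: q_def)
  have r0: "0 \<le> r" by (simp add: r_def)
  let ?u = "\<lambda>p. (\<Sum>x\<in>Trip n m. wgt n m x * of_bool (av p x))"
  have hu: "\<forall>p\<in>S. ?u p \<ge> 1 - q"
  proof
    fix p assume p: "p \<in> S"
    have "(\<Sum>x\<in>Trip n m. wgt n m x * of_bool (\<not> av p x)) \<le>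
          (\<Sum>x\<in>Trip n m. wgt n m x * of_bool (fst x = p) + wgt n m x * of_bool (fst (snd x) = p))"
      by (intro sum_mono) (auto simp: av_def wf_nonneg)
    also have "\<dots> = (\<Sum>x\<in>Trip n m. wgt n m x * of_bool (fst x = p)) + (\<Sum>x\<in>Trip n m. wgt n m x * of_bool (fst (snd x) = p))"
      by (rule sum.distrib)
    also have "\<dots> \<le> 1 / real n + real L / (real n * real (n - L))"
      using w_j[of p n m] w_a_bound[OF m1 L(2), of p] p S1 m1 by (auto simp: S_def)
    finally show "?u p \<ge> 1 - q" using compl_sum[OF n1 m1, of "av p"] by (simp add: q_def)
  qed
  have hv: "\<forall>p\<in>S. \<forall>p'\<in>S. p \<noteq> p' \<longrightarrow> (\<Sum>x\<in>Trip n m. wgt n m x * of_bool (av p x \<and> av p' x)) \<le> ?u p * ?u p' + r"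
  proof (intro ballI impI)
    fix p p' assume p: "p \<in> S" and p': "p' \<in> S" and ne: "p \<noteq> p'"
    define B where "B = (\<Sum>x\<in>Trip n m. wgt n m x * of_bool (\<not> av p x \<and> \<not> av p' x))"
    have "(\<Sum>x\<in>Trip n m. wgt n m x * of_bool (av p x \<and> av p' x)) =
          (\<Sum>x\<in>Trip n m. wgt n m x * of_bool (av p x) + wgt n m x * of_bool (av p' x) - wgt n m x + wgt n m x * of_bool (\<not> av p x \<and> \<not> av p' x))"
      by (intro sum.cong refl) (auto simp: of_bool_def)
    also have "\<dots> = ?u p + ?u p' - 1 + B"
      using sum_wf[OF n1 m1] by (simp add: B_def sum.distrib sum_subtractf)
    finally have veq: "(\<Sum>x\<in>Trip n m. wgt n m x * of_bool (av p x \<and> av p' x)) = ?u p + ?u p' - 1 + B" .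
    have "?u p \<le> 1" "?u p' \<le> 1" using u_le1[OF n1 m1] by auto
    then have "(1 - ?u p) * (1 - ?u p') \<ge> 0" by simp
    then have uu: "?u p + ?u p' - 1 \<le> ?u p * ?u p'" by (simp add: algebra_simps)
    define Z where "Z = {p, p'} \<times> {p, p'} \<times> {..<m}"
    define c where "c = 1 / (real n * real (n - L + 1) * real m)"
    have "B \<le> (\<Sum>x\<in>Trip n m. of_bool (x \<in> Z) * c)"
      unfolding B_def
    proof (intro sum_mono)
      fix x assume x: "x \<in> Trip n m"
      obtain j a k where xx: "x = (j, a, k)" by (metis prod.exhaust)
      show "wgt n m x * of_bool (\<not> av p x \<and> \<not> av p' x) \<le> of_bool (x \<in> Z) * c"
      proof (cases "\<not> av p x \<and> \<not> av p' x")
        case True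
        then have ja: "j \<in> {p, p'}" "a \<in> {p, p'}" using ne by (auto simp: av_def xx)
        have "k < m" using x by (auto simp: Trip_def xx)
        then have "x \<in> Z" using ja by (simp add: Z_def xx)
        have "j \<ge> n - L + 1" using ja p p' by (auto simp: S_def)
        then have "real (n - L + 1) \<le> real j" by linarith
        then have "wgt n m x \<le> c" unfolding wgt_def c_def xx using m1 L
          by (intro divide_left_mono mult_right_mono mult_left_mono) auto
        then show ?thesis using True \<open>x \<in> Z\<close> by simp
      next
        case False then show ?thesis by (auto simp: c_def)
      qed
    qed
    also have "\<dots> = (\<Sum>x\<in>Trip n m. if x \<in> Z then c else 0)"
      by (intro sum.cong refl) auto
    also have "\<dots> = (\<Sum>x\<in>{x\<in>Trip n m. x \<in> Z}. c)"
      by (rule sum.inter_filter[symmetric, OF finite_Trip])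
    also have "\<dots> = real (card {x\<in>Trip n m. x \<in> Z}) * c" by simp
    also have "\<dots> \<le> real (card Z) * c"
    proof (intro mult_right_mono)
      have "card {x\<in>Trip n m. x \<in> Z} \<le> card Z"
        by (rule card_mono) (auto simp: Z_def)
      then show "real (card {x\<in>Trip n m. x \<in> Z}) \<le> real (card Z)" by simp
    qed (simp add: c_def)
    also have "\<dots> = r"
      using ne m1 by (simp add: Z_def c_def r_def card_cartesian_product)
    finally have "B \<le> r" .
    then show "(\<Sum>x\<in>Trip n m. wgt n m x * of_bool (av p x \<and> av p' x)) \<le> ?u p * ?u p' + r"
      using veq uu by linarith
  qed
  have "tv m n (conv_pow m n (OST m n) t) (unif m n) \<ge>
           1 - 1 / (real (card S) * (1 - q)^t) - (exp (4*r*t) - 1) - real (card S) / real n"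
    by (rule key[OF m1 n1 S1 q0 qh[folded q_def] r0 hu hv])
  then show ?thesis by (simp add: cS q_def r_def)
qed

definition Tf :: "real \<Rightarrow> real \<Rightarrow> real" where
  "Tf c x = x * ln x - x * ln (ln x) - c * x"

definition Qf :: "real \<Rightarrow> real" where
  "Qf x = 1/x + 1/(x*(ln x - 1))"

definition Bf :: "real \<Rightarrow> real \<Rightarrow> real" where
  "Bf c x = 1 - 1 / ((x / ln x - 1) * exp (- Tf c x * (Qf x + 2 * (Qf x)^2)))
     - (exp (16 * Tf c x / (x * (x - x / ln x))) - 1) - 1 / ln x"

lemma pw_bound:
  fixes n m :: nat and c :: real
  assumes m1: "m \<ge> 1" and C1: "ln (real n) \<ge> 2" and C2: "Tf c (real n) \<ge> 0"
    and C3: "Qf (real n) \<le> 1/2" and C4: "real n / ln (real n) - 1 \<ge> 1"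
  shows "tv m n (conv_pow m n (OST m n) (nat \<lfloor>Tf c (real n)\<rfloor>)) (unif m n) \<ge> Bf c (real n)"
proof -
  define l where "l = ln (real n)"
  define T where "T = Tf c (real n)"
  define t where "t = nat \<lfloor>T\<rfloor>"
  define L where "L = nat \<lfloor>real n / l\<rfloor>"
  define Q where "Q = Qf (real n)"
  define q where "q = 1 / real n + real L / (real n * real (n - L))"
  have l2: "l \<ge> 2" using C1 by (simp add: l_def)
  have T0: "T \<ge> 0" using C2 by (simp add: T_def)
  have tT: "real t \<le> T" using T0 by (simp add: t_def)
  have npos: "real n > 0"
  proof -
    have "real n / l \<ge> 2" using C4 by (simp add: l_def)
    then show ?thesis using l2 by (smt (verit) divide_nonpos_pos)
  qed
  have nl0: "real n / l \<ge> 0" using npos l2 by simp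
  have Lr: "real L = of_int \<lfloor>real n / l\<rfloor>" using nl0 by (simp add: L_def)
  have Lle: "real L \<le> real n / l" using Lr by linarith
  have Lge: "real L \<ge> real n / l - 1" using Lr by linarith
  have L1: "1 \<le> L" using Lge C4 by (simp add: l_def)
  have nl2: "real n / l \<le> real n / 2" using l2 npos by (intro divide_left_mono) auto
  have Ln: "L < n" using Lle nl2 npos by linarith
  have nL: "real (n - L) = real n - real L" using Ln by simp
  have nLpos: "real n - real L > 0" using Ln by simp
  have qQ: "q \<le> Q"
  proof -
    have "real L * l \<le> real n" using Lle l2 by (simp add: field_simps)
    then have "real L * (l - 1) \<le> real n - real L" by (simp add: algebra_simps)
    then have "real L / (real n - real L) \<le> 1 / (l - 1)" using nLpos l2 by (simp add: field_simps)
    then have "(real L / (real n - real L)) / real n \<le> (1 / (l - 1)) / real n"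
      using npos by (intro divide_right_mono) auto
    then have "real L / (real n * (real n - real L)) \<le> 1 / (real n * (l - 1))"
      by (simp add: divide_divide_eq_left mult.commute)
    then show ?thesis by (simp add: q_def Q_def Qf_def nL l_def)
  qed
  have Q0: "Q \<ge> 0" using l2 npos by (simp add: Q_def Qf_def l_def)
  have qh: "1 / real n + real L / (real n * real (n - L)) \<le> 1/2" using order_trans[OF qQ[unfolded q_def Q_def] C3] .
  have q0: "q \<ge> 0" by (simp add: q_def)
  from inst[OF m1 L1 Ln qh, of t]
  have main: "tv m n (conv_pow m n (OST m n) t) (unif m n) \<ge>
     1 - 1 / (real L * (1 - q)^t) - (exp (4 * (4 / (real n * real (n - L + 1))) * t) - 1) - real L / real n"
    by (simp add: q_def)
  define E where "E = (real n / l - 1) * exp (- T * (Q + 2 * Q^2))"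
  have Epos: "E > 0" using C4 by (simp add: E_def l_def)
  have A: "1 / (real L * (1 - q)^t) \<le> 1 / E"
  proof -
    have "exp (- (Q + 2 * Q^2)) \<le> 1 - Q"
    proof -
      have "- Q - 2 * Q^2 \<le> ln (1 - Q)" using ln_one_minus_pos_lower_bound[OF Q0] C3 by (simp add: Q_def)
      then have "exp (- Q - 2 * Q^2) \<le> exp (ln (1 - Q))" by simp
      also have "\<dots> = 1 - Q" using C3 by (simp add: Q_def)
      finally show ?thesis by simp
    qed
    then have "exp (- (Q + 2 * Q^2)) ^ t \<le> (1 - Q) ^ t" by (intro power_mono) auto
    also have "\<dots> \<le> (1 - q) ^ t" using qQ C3 by (intro power_mono) (auto simp: Q_def)
    finally have h1: "exp (- (Q + 2 * Q^2) * real t) \<le> (1 - q) ^ t" by (simp add: exp_of_nat2_mult)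
    have "exp (- T * (Q + 2 * Q^2)) \<le> exp (- (Q + 2 * Q^2) * real t)"
    proof -
      have "real t * (Q + 2 * Q^2) \<le> T * (Q + 2 * Q^2)" using tT Q0 by (intro mult_right_mono) auto
      then show ?thesis by (simp add: algebra_simps)
    qed
    also note h1
    finally have h2: "exp (- T * (Q + 2 * Q^2)) \<le> (1 - q) ^ t" .
    have "E \<le> real L * (1 - q) ^ t" unfolding E_def
      using Lge h2 by (intro mult_mono) (auto simp: l_def)
    then show ?thesis using Epos by (intro divide_left_mono) auto
  qed
  have B: "exp (4 * (4 / (real n * real (n - L + 1))) * t) \<le> exp (16 * T / (real n * (real n - real n / l)))"
  proof -
    have "real n / l < real n" using nl2 npos by linarith
    then have d: "real n * (real n - real n / l) > 0" using npos by (intro mult_pos_pos) auto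
    have "real n - real n / l \<le> real (n - L + 1)" using Lle Ln by simp
    then have dd: "real n * (real n - real n / l) \<le> real n * real (n - L + 1)" using npos by simp
    have "4 * (4 / (real n * real (n - L + 1))) * t = 16 * real t / (real n * real (n - L + 1))" by simp
    also have "\<dots> \<le> 16 * real t / (real n * (real n - real n / l))"
      using d dd by (intro divide_left_mono) auto
    also have "\<dots> \<le> 16 * T / (real n * (real n - real n / l))"
      using d tT by (intro divide_right_mono) auto
    finally show ?thesis by simp
  qed
  have C: "real L / real n \<le> 1 / l"
    using Lle npos l2 by (simp add: field_simps)
  have Beq: "Bf c (real n) = 1 - 1 / E - (exp (16 * T / (real n * (real n - real n / l))) - 1) - 1 / l"
    by (simp add: Bf_def E_def T_def Q_def l_def)
  have "tv m n (conv_pow m n (OST m n) t) (unif m n) \<ge> Bf c (real n)"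
    using main A B C Beq by linarith
  then show ?thesis by (simp add: t_def T_def)
qed

lemma lim1: "((\<lambda>x. 1 / ((x / ln x - 1) * exp (- Tf c x * (Qf x + 2 * (Qf x)^2)))) \<longlongrightarrow> inverse (exp (c - 1))) at_top"
  unfolding Tf_def Qf_def by real_asymp

lemma lim2: "((\<lambda>x. exp (16 * Tf c x / (x * (x - x / ln x)))) \<longlongrightarrow> 1) at_top"
  unfolding Tf_def by real_asymp

lemma lim3: "((\<lambda>x::real. 1 / ln x) \<longlongrightarrow> 0) at_top"
  by real_asymp

lemma limB: "((\<lambda>x. Bf c x) \<longlongrightarrow> 1 - inverse (exp (c - 1))) at_top"
proof -
  have "((\<lambda>x. Bf c x) \<longlongrightarrow> 1 - inverse (exp (c - 1)) - (1 - 1) - 0) at_top"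
    unfolding Bf_def by (intro tendsto_diff tendsto_const lim1 lim2 lim3)
  then show ?thesis by simp
qed

lemma ev_conds: "eventually (\<lambda>x. ln x \<ge> 2 \<and> Tf c x \<ge> 0 \<and> Qf x \<le> 1/2 \<and> x / ln x - 1 \<ge> 1) at_top"
proof -
  have "eventually (\<lambda>x::real. ln x \<ge> 2) at_top" by real_asymp
  moreover have "eventually (\<lambda>x. Tf c x \<ge> 0) at_top" unfolding Tf_def by real_asymp
  moreover have "eventually (\<lambda>x. Qf x \<le> 1/2) at_top" unfolding Qf_def by real_asymp
  moreover have "eventually (\<lambda>x::real. x / ln x - 1 \<ge> 1) at_top" by real_asymp
  ultimately show ?thesis by eventually_elim auto
qed

lemma gap:
  fixes c :: real assumes "c > 2"
  shows "inverse (exp (c - 1)) < pi\<^sup>2 / (6 * (c - 2)\<^sup>2)"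
proof -
  define y where "y = c - 2"
  have y0: "y > 0" using assms by (simp add: y_def)
  have e1: "exp (1::real) \<ge> 2" using exp_ge_add_one_self[of "1::real"] by simp
  have ey: "exp y \<ge> 1 + y + y^2 / 2" using exp_lower_Taylor_quadratic[of y] y0 by simp
  have ec: "exp (c - 1) = exp 1 * exp y" by (simp add: y_def exp_add[symmetric])
  have "exp 1 * exp y \<ge> 2 * (1 + y + y^2/2)"
    using e1 ey y0 by (intro mult_mono) (auto intro: add_nonneg_nonneg)
  moreover have "2 * (1 + y + y^2/2) > y^2" using y0 by (simp add: algebra_simps)
  ultimately have ge: "exp (c - 1) > y^2" using ec by linarith
  have "pi^2 > (3::real)^2" by (rule power_strict_mono[OF pi_gt3]) auto
  then have p9: "pi^2 > (9::real)" by simp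
  have "6 * y^2 < pi^2 * exp (c - 1)"
  proof -
    have "6 * y^2 \<le> 9 * y^2" by simp
    also have "9 * y^2 < 9 * exp (c - 1)" using ge by simp
    also have "\<dots> < pi^2 * exp (c - 1)" using p9 by (intro mult_strict_right_mono) auto
    finally show ?thesis .
  qed
  moreover have "(6 * y^2) > 0" using y0 by simp
  moreover have "exp (c - 1) > 0" by simp
  ultimately have "1 / exp (c - 1) < pi^2 / (6 * y^2)"
    by (simp add: divide_simps mult.commute)
  then show ?thesis by (simp add: y_def inverse_eq_divide)
qed

theorem proposition3p2:
  fixes m :: nat and c :: real
  assumes "m \<ge> 1" and "c > 2"
  shows "ereal (1 - pi\<^sup>2 / (6 * (c - 2)\<^sup>2)) \<le>
    liminf (\<lambda>n::nat. ereal (tv m n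
      (conv_pow m n (OST m n) (nat \<lfloor>real n * ln (real n) - real n * ln (ln (real n)) - c * real n\<rfloor>))
      (unif m n)))"
proof -
  define g where "g = pi\<^sup>2 / (6 * (c - 2)\<^sup>2)"
  have seq: "((\<lambda>n. Bf c (real n)) \<longlongrightarrow> 1 - inverse (exp (c - 1))) sequentially"
    by (rule filterlim_compose[OF limB filterlim_real_sequentially])
  have "1 - g < 1 - inverse (exp (c - 1))" using gap[OF assms(2)] by (simp add: g_def)
  then have ev1: "eventually (\<lambda>n. 1 - g < Bf c (real n)) sequentially"
    by (rule order_tendstoD(1)[OF seq])
  have ev2: "eventually (\<lambda>n. ln (real n) \<ge> 2 \<and> Tf c (real n) \<ge> 0 \<and> Qf (real n) \<le> 1/2 \<and> real n / ln (real n) - 1 \<ge> 1) sequentially"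
    by (rule eventually_compose_filterlim[OF ev_conds filterlim_real_sequentially])
  have "eventually (\<lambda>n. ereal (1 - g) \<le> ereal (tv m n
      (conv_pow m n (OST m n) (nat \<lfloor>real n * ln (real n) - real n * ln (ln (real n)) - c * real n\<rfloor>))
      (unif m n))) sequentially"
    using ev1 ev2
  proof eventually_elim
    case (elim n)
    then have "tv m n (conv_pow m n (OST m n) (nat \<lfloor>Tf c (real n)\<rfloor>)) (unif m n) \<ge> Bf c (real n)"
      using pw_bound[OF assms(1)] by blast
    then show ?case using elim by (simp add: Tf_def)
  qed
  then show ?thesis unfolding g_def by (rule Liminf_bounded)
qed

end
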